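(* Let $d\ge 2$, $n\ge 2$, let $\mathcal G$ be an undirected graph on $\{1,\dots,n\}$ with $m$ edges, assumed acyclic and having a spanning tree, with an arbitrary orientation (incidence matrix $H$, $\bar H=H\otimes I_d$), and let $p(t)\in\mathbb R^{dn}$ be a time-varying configuration with well-defined bearings $g_k(t)$. Then the formation $\mathcal G(p(t))$ is bearing persistently exciting if and only if $g_k(t)$ is persistently exciting for all $k\in\{1,\dots,m\}$.
   Context: $e=\bar Hp=[e_1^\top,\dots,e_m^\top]^\top$, $g_k=e_k/\|e_k\|$. For $y\in\mathbb S^{d-1}$, $\pi_y=I_d-yy^\top$. $\Pi(t)=\mathrm{blkdiag}(\pi_{g_k(t)})$, $L=\bar H^\top\bar H$, $L_B(t)=\bar H^\top\Pi(t)\bar H$. A direction $y(t)\in\mathbb S^{d-1}$ is PE if there exist $T,\mu>0$ with $\int_t^{t+T}\pi_{y(\tau)}d\tau\ge\mu I_d$ for all $t$. $L_B$ is PE if there exist $T,\mu>0$ with $\int_t^{t+T}L_B(\tau)d\tau\ge\mu L$ for all $t$. The formation is bearing persistently exciting (BPE) if $\mathcal G$ has a spanning tree and $L_B$ is PE. *)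

theory Defs
  imports "HOL-Analysis.Analysis"
begin

text \<open>Edges are indexed by the finite type 'm, vertices by the finite type 'n.
  Edge k is oriented from src k to dst k; as an undirected edge it is {src k, dst k}.\<close>

definition joins :: "('m::finite \<Rightarrow> 'n::finite) \<Rightarrow> ('m::finite \<Rightarrow> 'n::finite) \<Rightarrow> 'm::finite \<Rightarrow> 'n::finite \<Rightarrow> 'n::finite \<Rightarrow> bool" where
  "joins src dst k u v \<longleftrightarrow> {src k, dst k} = {u, v}"

definition is_cycle_in :: "('m::finite \<Rightarrow> 'n::finite) \<Rightarrow> ('m::finite \<Rightarrow> 'n::finite) \<Rightarrow> 'm::finite set \<Rightarrow> 'm::finite list \<Rightarrow> 'n::finite list \<Rightarrow> bool" where
  "is_cycle_in src dst S ks vs \<longleftrightarrow>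
     ks \<noteq> [] \<and> distinct ks \<and> set ks \<subseteq> S \<and> length vs = Suc (length ks) \<and>
     List.hd vs = List.last vs \<and> distinct (List.tl vs) \<and>
     (\<forall>i < length ks. joins src dst (ks ! i) (vs ! i) (vs ! Suc i))"

definition acyclic_on :: "('m::finite \<Rightarrow> 'n::finite) \<Rightarrow> ('m::finite \<Rightarrow> 'n::finite) \<Rightarrow> 'm::finite set \<Rightarrow> bool" where
  "acyclic_on src dst S \<longleftrightarrow> \<not> (\<exists>ks vs. is_cycle_in src dst S ks vs)"

definition graph_acyclic :: "('m::finite \<Rightarrow> 'n::finite) \<Rightarrow> ('m::finite \<Rightarrow> 'n::finite) \<Rightarrow> bool" where
  "graph_acyclic src dst \<longleftrightarrow> acyclic_on src dst UNIV"

definition connected_on :: "('m::finite \<Rightarrow> 'n::finite) \<Rightarrow> ('m::finite \<Rightarrow> 'n::finite) \<Rightarrow> 'm::finite set \<Rightarrow> bool" where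
  "connected_on src dst S \<longleftrightarrow> (\<forall>u v. (\<lambda>x y. \<exists>k\<in>S. joins src dst k x y)\<^sup>*\<^sup>* u v)"

definition has_spanning_tree :: "('m::finite \<Rightarrow> 'n::finite) \<Rightarrow> ('m::finite \<Rightarrow> 'n::finite) \<Rightarrow> bool" where
  "has_spanning_tree src dst \<longleftrightarrow> (\<exists>S. acyclic_on src dst S \<and> connected_on src dst S)"

definition incidence :: "('m::finite \<Rightarrow> 'n::finite) \<Rightarrow> ('m::finite \<Rightarrow> 'n::finite) \<Rightarrow> real^'n::finite^'m::finite" where
  "incidence src dst = (\<chi> k i. if i = dst k then 1 else if i = src k then -1 else 0)"

text \<open>Kronecker product with the identity: Hbar = H \<otimes> I_d, rows indexed by (k,a), columns by (i,b).\<close>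
definition kron_id :: "real^'n::finite^'m::finite \<Rightarrow> real^('n::finite \<times> 'd::finite)^('m::finite \<times> 'd::finite)" where
  "kron_id H = (\<chi> r c. H $ fst r $ fst c * (if snd r = snd c then 1 else 0))"

definition Hbar :: "('m::finite \<Rightarrow> 'n::finite) \<Rightarrow> ('m::finite \<Rightarrow> 'n::finite) \<Rightarrow> real^('n::finite \<times> 'd::finite)^('m::finite \<times> 'd::finite)" where
  "Hbar src dst = kron_id (incidence src dst)"

definition edge_vec :: "('m::finite \<Rightarrow> 'n::finite) \<Rightarrow> ('m::finite \<Rightarrow> 'n::finite) \<Rightarrow> real^('n::finite \<times> 'd::finite) \<Rightarrow> 'm::finite \<Rightarrow> real^'d::finite" where
  "edge_vec src dst p k = (\<chi> a. (Hbar src dst *v p) $ (k, a))"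

definition bearing :: "('m::finite \<Rightarrow> 'n::finite) \<Rightarrow> ('m::finite \<Rightarrow> 'n::finite) \<Rightarrow> real^('n::finite \<times> 'd::finite) \<Rightarrow> 'm::finite \<Rightarrow> real^'d::finite" where
  "bearing src dst p k = (1 / norm (edge_vec src dst p k)) *\<^sub>R edge_vec src dst p k"

definition proj_perp :: "real^'d::finite \<Rightarrow> real^'d::finite^'d::finite" where
  "proj_perp y = mat 1 - (\<chi> i j. y $ i * y $ j)"

definition blk_proj :: "('m::finite \<Rightarrow> real^'d::finite) \<Rightarrow> real^('m::finite \<times> 'd::finite)^('m::finite \<times> 'd::finite)" where
  "blk_proj g = (\<chi> r c. if fst r = fst c then proj_perp (g (fst r)) $ snd r $ snd c else 0)"

definition lap :: "('m::finite \<Rightarrow> 'n::finite) \<Rightarrow> ('m::finite \<Rightarrow> 'n::finite) \<Rightarrow> real^('n::finite \<times> 'd::finite)^('n::finite \<times> 'd::finite)" where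
  "lap src dst = transpose (Hbar src dst) ** Hbar src dst"

definition bearing_lap :: "('m::finite \<Rightarrow> 'n::finite) \<Rightarrow> ('m::finite \<Rightarrow> 'n::finite) \<Rightarrow> real^('n::finite \<times> 'd::finite) \<Rightarrow> real^('n::finite \<times> 'd::finite)^('n::finite \<times> 'd::finite)" where
  "bearing_lap src dst p = transpose (Hbar src dst) ** blk_proj (bearing src dst p) ** Hbar src dst"

definition loewner_le :: "real^'k::finite^'k::finite \<Rightarrow> real^'k::finite^'k::finite \<Rightarrow> bool" where
  "loewner_le A B \<longleftrightarrow> (\<forall>x. 0 \<le> x \<bullet> ((B - A) *v x))"

definition PE_direction :: "(real \<Rightarrow> real^'d::finite) \<Rightarrow> bool" where
  "PE_direction y \<longleftrightarrow> (\<exists>T \<mu>. T > 0 \<and> \<mu> > 0 \<and> (\<forall>t.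
      (\<lambda>\<tau>. proj_perp (y \<tau>)) integrable_on {t..t+T} \<and>
      loewner_le (\<mu> *\<^sub>R mat 1) (integral {t..t+T} (\<lambda>\<tau>. proj_perp (y \<tau>)))))"

definition PE_bearing_lap :: "('m::finite \<Rightarrow> 'n::finite) \<Rightarrow> ('m::finite \<Rightarrow> 'n::finite) \<Rightarrow> (real \<Rightarrow> real^('n::finite \<times> 'd::finite)) \<Rightarrow> bool" where
  "PE_bearing_lap src dst p \<longleftrightarrow> (\<exists>T \<mu>. T > 0 \<and> \<mu> > 0 \<and> (\<forall>t.
      (\<lambda>\<tau>. bearing_lap src dst (p \<tau>)) integrable_on {t..t+T} \<and>
      loewner_le (\<mu> *\<^sub>R lap src dst) (integral {t..t+T} (\<lambda>\<tau>. bearing_lap src dst (p \<tau>)))))"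

definition BPE :: "('m::finite \<Rightarrow> 'n::finite) \<Rightarrow> ('m::finite \<Rightarrow> 'n::finite) \<Rightarrow> (real \<Rightarrow> real^('n::finite \<times> 'd::finite)) \<Rightarrow> bool" where
  "BPE src dst p \<longleftrightarrow> has_spanning_tree src dst \<and> PE_bearing_lap src dst p"

end

theory Submission
  imports Defs
begin


definition blk :: "real^('m::finite \<times> 'd::finite) \<Rightarrow> 'm \<Rightarrow> real^'d" where
  "blk y k = (\<chi> a. y $ (k, a))"

lemma sum_prod_univ:
  "(\<Sum>r\<in>(UNIV::('a::finite \<times> 'b::finite) set). f r) = (\<Sum>k\<in>UNIV. \<Sum>a\<in>UNIV. f (k, a))"
  by (subst UNIV_Times_UNIV[symmetric]) (rule sum.cartesian_product')

lemma sum_delta_blk: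
  fixes F z :: "'m::finite \<Rightarrow> 'd::finite \<Rightarrow> real"
  shows "(\<Sum>k'\<in>UNIV. \<Sum>b\<in>UNIV. (if k = k' then F k' b else 0) * z k' b) = (\<Sum>b\<in>UNIV. F k b * z k b :: real)"
proof -
  have "(\<Sum>k'\<in>UNIV. \<Sum>b\<in>UNIV. (if k = k' then F k' b else 0) * z k' b) =
     (\<Sum>k'\<in>UNIV. if k = k' then (\<Sum>b\<in>UNIV. F k' b * z k' b) else (0::real))"
    by (intro sum.cong) auto
  then show ?thesis by simp
qed

lemma inner_blk_proj:
  "y \<bullet> (blk_proj g *v z) = (\<Sum>k\<in>UNIV. blk y k \<bullet> (proj_perp (g k) *v blk z k))"
proof -
  have "y \<bullet> (blk_proj g *v z) = (\<Sum>k\<in>UNIV. \<Sum>a\<in>UNIV. y $ (k,a) * (\<Sum>k'\<in>UNIV. \<Sum>b\<in>UNIV.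
      (if k = k' then proj_perp (g k) $ a $ b else 0) * z $ (k', b)))"
    unfolding inner_vec_def matrix_vector_mult_def blk_proj_def
    by (simp only: sum_prod_univ vec_lambda_beta fst_conv snd_conv inner_real_def)
  also have "\<dots> = (\<Sum>k\<in>UNIV. \<Sum>a\<in>UNIV. y $ (k,a) * (\<Sum>b\<in>UNIV. proj_perp (g k) $ a $ b * z $ (k, b)))"
    by (simp add: sum_delta_blk)
  also have "\<dots> = (\<Sum>k\<in>UNIV. blk y k \<bullet> (proj_perp (g k) *v blk z k))"
    by (simp add: inner_vec_def matrix_vector_mult_def blk_def)
  finally show ?thesis .
qed

lemma inner_blk: "y \<bullet> z = (\<Sum>k\<in>UNIV. blk y k \<bullet> blk z k)"
  by (simp add: inner_vec_def blk_def sum_prod_univ)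

lemma inner_transpose_sandwich:
  fixes A :: "real^'n::finite^'m::finite" and B :: "real^'m^'m"
  shows "x \<bullet> ((transpose A ** B ** A) *v z) = (A *v x) \<bullet> (B *v (A *v z))"
proof -
  have "x \<bullet> ((transpose A ** B ** A) *v z) = x \<bullet> (transpose A *v (B *v (A *v z)))"
    by (simp add: matrix_vector_mul_assoc[symmetric] matrix_mul_assoc)
  also have "\<dots> = (A *v x) \<bullet> (B *v (A *v z))"
    proof -
      have "x \<bullet> (transpose A *v (B *v (A *v z))) = ((B *v (A *v z)) v* A) \<bullet> x"
        by (simp add: inner_commute)
      also have "\<dots> = (B *v (A *v z)) \<bullet> (A *v x)" by (rule dot_lmul_matrix)
      also have "\<dots> = (A *v x) \<bullet> (B *v (A *v z))" by (rule inner_commute)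
      finally show ?thesis .
    qed
  finally show ?thesis .
qed

lemma inner_transpose_prod:
  fixes A :: "real^'n::finite^'m::finite"
  shows "x \<bullet> ((transpose A ** A) *v z) = (A *v x) \<bullet> (A *v z)"
  using inner_transpose_sandwich[of x A "mat 1" z] by (simp add: matrix_mul_lid)

lemma outer_mult: "(\<chi> i j. y $ i * y $ j) *v v = (y \<bullet> v) *\<^sub>R (y::real^'d::finite)"
proof (subst vec_eq_iff, intro allI)
  fix i
  have "((\<chi> i j. y $ i * y $ j) *v v) $ i = (\<Sum>j\<in>UNIV. y $ i * (y $ j * v $ j))"
    by (simp add: matrix_vector_mult_def mult.assoc)
  also have "\<dots> = y $ i * (\<Sum>j\<in>UNIV. y $ j * v $ j)" by (rule sum_distrib_left[symmetric])
  also have "\<dots> = ((y \<bullet> v) *\<^sub>R y) $ i" by (simp add: inner_vec_def mult.commute)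
  finally show "((\<chi> i j. y $ i * y $ j) *v v) $ i = ((y \<bullet> v) *\<^sub>R y) $ i" .
qed

lemma proj_perp_mult: "proj_perp y *v v = v - (y \<bullet> v) *\<^sub>R y"
  by (simp add: proj_perp_def matrix_vector_mult_diff_rdistrib outer_mult)

lemma quad_proj: "v \<bullet> (proj_perp y *v v) = v \<bullet> v - (y \<bullet> v)^2"
  by (simp add: proj_perp_mult inner_diff_right power2_eq_square inner_commute)

lemma quad_proj_nonneg: "norm y \<le> 1 \<Longrightarrow> 0 \<le> v \<bullet> (proj_perp y *v v)"
proof -
  assume "norm y \<le> 1"
  have "\<bar>y \<bullet> v\<bar> \<le> norm y * norm v" by (rule Cauchy_Schwarz_ineq2)
  also have "\<dots> \<le> norm v" using \<open>norm y \<le> 1\<close> by (simp add: mult_left_le_one_le)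
  finally have "\<bar>y \<bullet> v\<bar>^2 \<le> (norm v)^2" by (rule power_mono) simp
  then have "(y \<bullet> v)^2 \<le> (norm v)^2" by simp
  then show ?thesis by (simp add: quad_proj power2_norm_eq_inner)
qed

lemma sum_kron_delta:
  fixes a :: "'d::finite"
  shows "(\<Sum>b\<in>UNIV. c * (if a = b then 1 else 0) * f b) = (c * f a :: real)"
proof -
  have "(\<Sum>b\<in>UNIV. c * (if a = b then 1 else 0) * f b) = (\<Sum>b\<in>UNIV. if a = b then c * f b else 0)"
    by (intro sum.cong) auto
  then show ?thesis by simp
qed

lemma Hbar_mult:
  assumes "src k \<noteq> dst k"
  shows "(Hbar src dst *v x) $ (k, a) = x $ (dst k, a) - x $ (src k, a)"
proof -
  have "(Hbar src dst *v x) $ (k, a) = (\<Sum>i\<in>UNIV. \<Sum>b\<in>UNIV.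
     (if i = dst k then 1 else if i = src k then -1 else 0) * (if a = b then 1 else 0) * x $ (i, b))"
    unfolding Hbar_def kron_id_def incidence_def matrix_vector_mult_def
    by (simp only: sum_prod_univ vec_lambda_beta fst_conv snd_conv)
  also have "\<dots> = (\<Sum>i\<in>UNIV. (if i = dst k then 1 else if i = src k then -1 else 0) * x $ (i, a))"
    by (intro sum.cong refl sum_kron_delta)
  also have "\<dots> = (\<Sum>i\<in>UNIV. (if i = dst k then x $ (i, a) else 0) - (if i = src k then x $ (i, a) else 0))"
    using assms by (intro sum.cong) auto
  also have "\<dots> = x $ (dst k, a) - x $ (src k, a)"
    by (simp add: sum_subtractf)
  finally show ?thesis .
qed




inductive reach :: "('m::finite \<Rightarrow> 'n::finite) \<Rightarrow> ('m \<Rightarrow> 'n) \<Rightarrow> 'm \<Rightarrow> 'n \<Rightarrow> bool"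
  for src dst k0 where
  base: "reach src dst k0 (dst k0)"
| step: "reach src dst k0 u \<Longrightarrow> k \<noteq> k0 \<Longrightarrow> joins src dst k u v \<Longrightarrow> reach src dst k0 v"

definition good_path where
  "good_path src dst k0 vs v \<longleftrightarrow> vs \<noteq> [] \<and> distinct vs \<and> hd vs = dst k0 \<and> last vs = v \<and>
     (\<forall>i < length vs - 1. \<exists>k. k \<noteq> k0 \<and> joins src dst k (vs!i) (vs!Suc i))"

lemma reach_path:
  assumes "reach src dst k0 v" shows "\<exists>vs. good_path src dst k0 vs v"
  using assms
proof (induction rule: reach.induct)
  case base
  then show ?case by (rule exI[of _ "[dst k0]"]) (simp add: good_path_def)
next
  case (step u k v)
  then obtain vs where vs: "good_path src dst k0 vs u" by blast
  show ?case
  proof (cases "v \<in> set vs")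
    case True
    then obtain j where j: "j < length vs" "vs ! j = v" by (auto simp: in_set_conv_nth)
    have "good_path src dst k0 (take (Suc j) vs) v"
      unfolding good_path_def
    proof (intro conjI allI impI)
      show "take (Suc j) vs \<noteq> []" using vs by (simp add: good_path_def)
      show "distinct (take (Suc j) vs)" using vs by (simp add: good_path_def)
      show "hd (take (Suc j) vs) = dst k0" using vs by (simp add: good_path_def hd_take)
      show "last (take (Suc j) vs) = v" using j by (simp add: take_Suc_conv_app_nth)
      fix i assume "i < length (take (Suc j) vs) - 1"
      then have "i < j" "i < length vs - 1" using j by auto
      then show "\<exists>k. k \<noteq> k0 \<and> joins src dst k (take (Suc j) vs ! i) (take (Suc j) vs ! Suc i)"
        using vs unfolding good_path_def by simp
    qed
    then show ?thesis by blast
  next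
    case False
    have "good_path src dst k0 (vs @ [v]) v"
      unfolding good_path_def
    proof (intro conjI allI impI)
      show "vs @ [v] \<noteq> []" by simp
      show "distinct (vs @ [v])" using vs False by (simp add: good_path_def)
      show "hd (vs @ [v]) = dst k0" using vs by (simp add: good_path_def)
      show "last (vs @ [v]) = v" by simp
      fix i assume i: "i < length (vs @ [v]) - 1"
      show "\<exists>k. k \<noteq> k0 \<and> joins src dst k ((vs @ [v]) ! i) ((vs @ [v]) ! Suc i)"
      proof (cases "i < length vs - 1")
        case True
        then have "Suc i < length vs" "i < length vs" by auto
        then show ?thesis using vs True unfolding good_path_def by (simp add: nth_append)
      next
        case False
        then have "i = length vs - 1" using i by simp
        moreover have "vs ! (length vs - 1) = u" using vs unfolding good_path_def by (metis last_conv_nth)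
        ultimately show ?thesis using step.hyps vs
          by (auto simp: nth_append good_path_def)
      qed
    qed
    then show ?thesis by blast
  qed
qed

lemma joins_sym: "joins src dst k u v \<longleftrightarrow> joins src dst k v u"
  by (auto simp: joins_def insert_commute)

lemma no_self_loop:
  assumes "graph_acyclic src dst" shows "src k \<noteq> dst k"
proof
  assume h: "src k = dst k"
  have "is_cycle_in src dst UNIV [k] [src k, src k]"
    using h by (simp add: is_cycle_in_def joins_def)
  then show False using assms by (auto simp: graph_acyclic_def acyclic_on_def)
qed

lemma not_reach_src:
  assumes "graph_acyclic src dst" shows "\<not> reach src dst k0 (src k0)"
proof
  assume "reach src dst k0 (src k0)"
  then obtain vs where vs: "good_path src dst k0 vs (src k0)" using reach_path by blast
  define e where "e i = (SOME k. k \<noteq> k0 \<and> joins src dst k (vs!i) (vs!Suc i))" for i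
  have e: "e i \<noteq> k0 \<and> joins src dst (e i) (vs!i) (vs!Suc i)" if "i < length vs - 1" for i
    unfolding e_def by (rule someI_ex) (use vs that in \<open>auto simp: good_path_def\<close>)
  have dv: "distinct vs" and ne: "vs \<noteq> []" and hd: "hd vs = dst k0" and lst: "last vs = src k0"
    using vs by (auto simp: good_path_def)
  have inj: "inj_on e {0..<length vs - 1}"
  proof (rule inj_onI)
    fix i j assume i: "i \<in> {0..<length vs - 1}" and j: "j \<in> {0..<length vs - 1}" and eq: "e i = e j"
    have "{vs!i, vs!Suc i} = {vs!j, vs!Suc j}"
      using e[of i] e[of j] i j eq by (auto simp: joins_def)
    moreover have "i < length vs" "Suc i < length vs" "j < length vs" "Suc j < length vs"
      using i j by auto
    ultimately show "i = j" using dv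
      by (auto simp: doubleton_eq_iff nth_eq_iff_index_eq)
  qed
  define ks where "ks = k0 # map e [0..<length vs - 1]"
  define ws where "ws = src k0 # vs"
  have "is_cycle_in src dst UNIV ks ws"
    unfolding is_cycle_in_def
  proof (intro conjI allI impI)
    show "ks \<noteq> []" by (simp add: ks_def)
    have "k0 \<notin> e ` {0..<length vs - 1}" using e by force
    then show "distinct ks" using inj by (simp add: ks_def distinct_map)
    show "set ks \<subseteq> UNIV" by simp
    show "length ws = Suc (length ks)" using ne by (simp add: ks_def ws_def)
    show "hd ws = last ws" using lst ne by (simp add: ws_def)
    show "distinct (tl ws)" using dv by (simp add: ws_def)
    fix i assume i: "i < length ks"
    show "joins src dst (ks ! i) (ws ! i) (ws ! Suc i)"
    proof (cases i)
      case 0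
      then show ?thesis using hd ne by (simp add: ks_def ws_def joins_def hd_conv_nth)
    next
      case (Suc j)
      then have "j < length vs - 1" using i by (simp add: ks_def)
      then show ?thesis using e[of j] Suc by (simp add: ks_def ws_def)
    qed
  qed
  then show False using assms by (auto simp: graph_acyclic_def acyclic_on_def)
qed

lemma reach_edge:
  assumes "k \<noteq> k0" shows "reach src dst k0 (src k) \<longleftrightarrow> reach src dst k0 (dst k)"
proof -
  have "joins src dst k (src k) (dst k)" "joins src dst k (dst k) (src k)"
    by (auto simp: joins_def)
  then show ?thesis using assms reach.step by metis
qed




lemma bl_quad: "bounded_linear (\<lambda>M::real^'k::finite^'j::finite. x \<bullet> (M *v z))"
proof -
  have "linear (\<lambda>M::real^'k::finite^'j::finite. x \<bullet> (M *v z))"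
    by (rule linearI) (simp_all add: matrix_vector_mult_add_rdistrib inner_add_right
        flip: scaleR_matrix_vector_assoc)
  then show ?thesis by (simp add: linear_conv_bounded_linear)
qed

lemma quad_integrable:
  fixes F :: "real \<Rightarrow> real^'k::finite^'j::finite"
  assumes "F integrable_on S"
  shows "(\<lambda>\<tau>. x \<bullet> (F \<tau> *v z)) integrable_on S"
  using integrable_linear[OF assms bl_quad[of x z]] by (simp add: o_def)

lemma quad_integral:
  fixes F :: "real \<Rightarrow> real^'k::finite^'j::finite"
  assumes "F integrable_on S"
  shows "integral S (\<lambda>\<tau>. x \<bullet> (F \<tau> *v z)) = x \<bullet> (integral S F *v z)"
  using integral_linear[OF assms bl_quad[of x z]] by (simp add: o_def)

lemma vec_integrable:
  fixes f :: "real \<Rightarrow> 'a::euclidean_space^'n::finite"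
  assumes "\<And>i. (\<lambda>x. f x $ i) integrable_on S"
  shows "f integrable_on S"
proof (subst integrable_componentwise_iff, intro ballI)
  fix b :: "'a^'n" assume "b \<in> Basis"
  then obtain i u where b: "b = axis i u" "u \<in> Basis" by (auto simp: Basis_vec_def)
  have "(\<lambda>x. f x $ i \<bullet> u) integrable_on S"
    using integrable_linear[OF assms[of i] bounded_linear_inner_left[of u]] by (simp add: o_def)
  then show "(\<lambda>x. f x \<bullet> b) integrable_on S" using b by (simp add: inner_axis)
qed

lemma entry_quad: "(M::real^'k::finite^'j::finite) $ i $ j = axis i 1 \<bullet> (M *v axis j 1)"
  by (simp add: matrix_vector_mult_basis inner_axis' column_def)

lemma mat_integrable:
  fixes F :: "real \<Rightarrow> real^'k::finite^'j::finite"
  assumes "\<And>i j. (\<lambda>\<tau>. axis i 1 \<bullet> (F \<tau> *v axis j 1)) integrable_on S"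
  shows "F integrable_on S"
  using assms by (intro vec_integrable) (simp add: entry_quad[symmetric])

lemma loewner_iff: "loewner_le A B \<longleftrightarrow> (\<forall>x. x \<bullet> (A *v x) \<le> x \<bullet> (B *v x))"
  by (simp add: loewner_le_def matrix_vector_mult_diff_rdistrib inner_diff_right)

lemma integrable_all:
  fixes f :: "real \<Rightarrow> 'a::banach"
  assumes T: "T > 0" and f: "\<And>t. f integrable_on {t..t+T}"
  shows "f integrable_on {a..b}"
proof -
  have n: "f integrable_on {t..t + real n * T}" for n t
  proof (induction n)
    case 0
    then show ?case using integrable_on_refl[of f t] by simp
  next
    case (Suc n)
    have "f integrable_on {t + real n * T..t + real n * T + T}" by (rule f)
    moreover have "t \<le> t + real n * T" "t + real n * T \<le> t + real n * T + T" using T by auto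
    ultimately have "f integrable_on {t..t + real n * T + T}"
      using Henstock_Kurzweil_Integration.integrable_combine Suc by blast
    then show ?case by (simp add: algebra_simps)
  qed
  obtain n where "(b - a) / T < real n" using reals_Archimedean2 by blast
  then have "b \<le> a + real n * T" using T by (simp add: field_simps)
  then show ?thesis by (intro integrable_on_subinterval[OF n[of a n]]) auto
qed




lemma scal_quad: "x \<bullet> ((c *\<^sub>R M) *v z) = c * (x \<bullet> ((M::real^'k::finite^'j::finite) *v z))"
  by (simp flip: scaleR_matrix_vector_assoc)

lemma scal_id: "x \<bullet> ((c *\<^sub>R mat 1) *v x) = c * (x \<bullet> (x::real^'k::finite))"
  by (simp add: scal_quad)

theorem lemma4:
  fixes src dst :: "'m::finite \<Rightarrow> 'n::finite"
    and p :: "real \<Rightarrow> real^('n \<times> 'd::finite)"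
  assumes "CARD('d) \<ge> 2" and "CARD('n) \<ge> 2"
    and "graph_acyclic src dst"
    and "has_spanning_tree src dst"
    and "\<forall>t k. edge_vec src dst (p t) k \<noteq> 0"
  shows "BPE src dst p \<longleftrightarrow> (\<forall>k. PE_direction (\<lambda>t. bearing src dst (p t) k))"
proof -
  let ?H = "Hbar src dst :: real^('n\<times>'d)^('m\<times>'d)"
  define g where "g = (\<lambda>\<tau>. bearing src dst (p \<tau>))"
  define LB where "LB = (\<lambda>\<tau>. bearing_lap src dst (p \<tau>))"
  define L where "L = (lap src dst :: real^('n\<times>'d)^('n\<times>'d))"
  have gnorm: "norm (g \<tau> k) = 1" for \<tau> k
    using assms(5) by (simp add: g_def bearing_def)
  have psd: "0 \<le> v \<bullet> (proj_perp (g \<tau> k) *v v)" for \<tau> k v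
    using quad_proj_nonneg[of "g \<tau> k" v] gnorm[of \<tau> k] by simp
  have QLB: "x \<bullet> (LB \<tau> *v z) = (\<Sum>k\<in>UNIV. blk (?H *v x) k \<bullet> (proj_perp (g \<tau> k) *v blk (?H *v z) k))"
    for x z \<tau>
    by (simp add: LB_def bearing_lap_def inner_transpose_sandwich inner_blk_proj g_def)
  have QL: "x \<bullet> (L *v z) = (\<Sum>k\<in>UNIV. blk (?H *v x) k \<bullet> blk (?H *v z) k)" for x z
    unfolding L_def lap_def inner_transpose_prod by (rule inner_blk)
  have PEB: "PE_bearing_lap src dst p \<longleftrightarrow> (\<exists>T \<mu>. T > 0 \<and> \<mu> > 0 \<and> (\<forall>t.
      LB integrable_on {t..t+T} \<and> loewner_le (\<mu> *\<^sub>R L) (integral {t..t+T} LB)))"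
    by (simp add: PE_bearing_lap_def LB_def L_def)
  have PED: "PE_direction (\<lambda>t. bearing src dst (p t) k) \<longleftrightarrow> (\<exists>T \<mu>. T > 0 \<and> \<mu> > 0 \<and> (\<forall>t.
      (\<lambda>\<tau>. proj_perp (g \<tau> k)) integrable_on {t..t+T} \<and>
      loewner_le (\<mu> *\<^sub>R mat 1) (integral {t..t+T} (\<lambda>\<tau>. proj_perp (g \<tau> k)))))" for k
    by (simp add: PE_direction_def g_def)

  have dir1: "PE_direction (\<lambda>t. bearing src dst (p t) k0)" if PE: "PE_bearing_lap src dst p" for k0
  proof -
    obtain T \<mu> where T: "T > 0" "\<mu> > 0" and int: "\<And>t. LB integrable_on {t..t+T}"
      and le: "\<And>t. loewner_le (\<mu> *\<^sub>R L) (integral {t..t+T} LB)"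
      using PE unfolding PEB by blast
    define X where "X v = (\<chi> r. if reach src dst k0 (fst r) then v $ snd r else 0 :: real^('n\<times>'d))"
      for v :: "real^'d"
    have blkX: "blk (?H *v X v) k = (if k = k0 then v else 0)" for v k
    proof -
      have sl: "src k \<noteq> dst k" by (rule no_self_loop[OF assms(3)])
      show ?thesis
      proof (cases "k = k0")
        case True
        then show ?thesis using not_reach_src[OF assms(3), of k0]
          by (simp add: blk_def vec_eq_iff Hbar_mult[where src=src and dst=dst and k=k0, OF no_self_loop[OF assms(3)]] X_def reach.base)
      next
        case False
        then show ?thesis using reach_edge[OF False, of src dst]
          by (simp add: blk_def vec_eq_iff Hbar_mult[where src=src and dst=dst and k=k, OF sl] X_def)
      qed
    qed
    have QX: "X u \<bullet> (LB \<tau> *v X w) = u \<bullet> (proj_perp (g \<tau> k0) *v w)" for u w \<tau>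
    proof -
      have "X u \<bullet> (LB \<tau> *v X w) = (\<Sum>k\<in>UNIV. if k = k0 then u \<bullet> (proj_perp (g \<tau> k0) *v w) else 0)"
        unfolding QLB blkX by (intro sum.cong) auto
      then show ?thesis by simp
    qed
    have QLX: "X u \<bullet> (L *v X w) = u \<bullet> w" for u w
    proof -
      have "X u \<bullet> (L *v X w) = (\<Sum>k\<in>UNIV. if k = k0 then u \<bullet> w else 0)"
        unfolding QL blkX by (intro sum.cong) auto
      then show ?thesis by simp
    qed
    have intP: "(\<lambda>\<tau>. proj_perp (g \<tau> k0)) integrable_on {t..t+T}" for t
    proof (rule mat_integrable)
      fix i j
      have "(\<lambda>\<tau>. axis i 1 \<bullet> (proj_perp (g \<tau> k0) *v axis j 1)) = (\<lambda>\<tau>. X (axis i 1) \<bullet> (LB \<tau> *v X (axis j 1)))"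
        using QX by simp
      then show "(\<lambda>\<tau>. axis i 1 \<bullet> (proj_perp (g \<tau> k0) *v axis j 1)) integrable_on {t..t+T}"
        using quad_integrable[OF int] by simp
    qed
    show ?thesis unfolding PED
    proof (intro exI conjI allI)
      fix t
      show "(\<lambda>\<tau>. proj_perp (g \<tau> k0)) integrable_on {t..t+T}" by (rule intP)
      show "loewner_le (\<mu> *\<^sub>R mat 1) (integral {t..t+T} (\<lambda>\<tau>. proj_perp (g \<tau> k0)))"
        unfolding loewner_iff
      proof
        fix v
        have "v \<bullet> ((\<mu> *\<^sub>R mat 1) *v v) = X v \<bullet> ((\<mu> *\<^sub>R L) *v X v)"
          by (simp add: scal_id scal_quad QLX)
        also have "\<dots> \<le> X v \<bullet> (integral {t..t+T} LB *v X v)"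
          using le[of t] by (simp add: loewner_iff)
        also have "\<dots> = integral {t..t+T} (\<lambda>\<tau>. X v \<bullet> (LB \<tau> *v X v))"
          by (simp add: quad_integral[OF int])
        also have "\<dots> = integral {t..t+T} (\<lambda>\<tau>. v \<bullet> (proj_perp (g \<tau> k0) *v v))"
          by (simp add: QX)
        also have "\<dots> = v \<bullet> (integral {t..t+T} (\<lambda>\<tau>. proj_perp (g \<tau> k0)) *v v)"
          by (rule quad_integral[OF intP])
        finally show "v \<bullet> ((\<mu> *\<^sub>R mat 1) *v v) \<le> v \<bullet> (integral {t..t+T} (\<lambda>\<tau>. proj_perp (g \<tau> k0)) *v v)" .
      qed
    qed (use T in auto)
  qed

  have dir2: "PE_bearing_lap src dst p" if PE: "\<forall>k. PE_direction (\<lambda>t. bearing src dst (p t) k)"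
  proof -
    have "\<forall>k. \<exists>T \<mu>. T > 0 \<and> \<mu> > 0 \<and> (\<forall>t.
      (\<lambda>\<tau>. proj_perp (g \<tau> k)) integrable_on {t..t+T} \<and>
      loewner_le (\<mu> *\<^sub>R mat 1) (integral {t..t+T} (\<lambda>\<tau>. proj_perp (g \<tau> k))))"
      using PE unfolding PED by blast
    then have "\<exists>Tk. \<forall>k. \<exists>\<mu>. Tk k > 0 \<and> \<mu> > 0 \<and> (\<forall>t.
      (\<lambda>\<tau>. proj_perp (g \<tau> k)) integrable_on {t..t + Tk k} \<and>
      loewner_le (\<mu> *\<^sub>R mat 1) (integral {t..t + Tk k} (\<lambda>\<tau>. proj_perp (g \<tau> k))))"
      by (rule choice)
    then obtain Tk where "\<forall>k. \<exists>\<mu>. Tk k > 0 \<and> \<mu> > 0 \<and> (\<forall>t.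
      (\<lambda>\<tau>. proj_perp (g \<tau> k)) integrable_on {t..t + Tk k} \<and>
      loewner_le (\<mu> *\<^sub>R mat 1) (integral {t..t + Tk k} (\<lambda>\<tau>. proj_perp (g \<tau> k))))"
      by blast
    then have "\<exists>\<mu>k. \<forall>k. Tk k > 0 \<and> \<mu>k k > 0 \<and> (\<forall>t.
      (\<lambda>\<tau>. proj_perp (g \<tau> k)) integrable_on {t..t + Tk k} \<and>
      loewner_le (\<mu>k k *\<^sub>R mat 1) (integral {t..t + Tk k} (\<lambda>\<tau>. proj_perp (g \<tau> k))))"
      by (rule choice)
    then obtain \<mu>k where Tk: "\<And>k. Tk k > 0" "\<And>k. \<mu>k k > 0"
      and intk: "\<And>k t. (\<lambda>\<tau>. proj_perp (g \<tau> k)) integrable_on {t..t + Tk k}"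
      and lek: "\<And>k t. loewner_le (\<mu>k k *\<^sub>R mat 1) (integral {t..t + Tk k} (\<lambda>\<tau>. proj_perp (g \<tau> k)))"
      by blast
    define T where "T = Max (range Tk)"
    define \<mu> where "\<mu> = Min (range \<mu>k)"
    have TkT: "Tk k \<le> T" for k by (simp add: T_def)
    have \<mu>\<mu>: "\<mu> \<le> \<mu>k k" for k by (simp add: \<mu>_def)
    have Tpos: "T > 0" using TkT[of undefined] Tk(1)[of undefined] by linarith
    have \<mu>pos: "\<mu> > 0" using Tk(2) by (simp add: \<mu>_def)
    have intall: "(\<lambda>\<tau>. proj_perp (g \<tau> k)) integrable_on {a..b}" for k a b
      by (rule integrable_all[OF Tk(1) intk])
    have intq: "(\<lambda>\<tau>. u \<bullet> (proj_perp (g \<tau> k) *v w)) integrable_on {a..b}" for k a b u w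
      by (rule quad_integrable[OF intall])
    have intLB: "LB integrable_on {a..b}" for a b
    proof (rule mat_integrable)
      fix i j
      show "(\<lambda>\<tau>. axis i 1 \<bullet> (LB \<tau> *v axis j 1)) integrable_on {a..b}"
        unfolding QLB by (rule integrable_sum) (auto intro: intq)
    qed
    show ?thesis unfolding PEB
    proof (intro exI conjI allI)
      fix t
      show "LB integrable_on {t..t+T}" by (rule intLB)
      show "loewner_le (\<mu> *\<^sub>R L) (integral {t..t+T} LB)"
        unfolding loewner_iff
      proof
        fix x
        define y where "y = ?H *v x"
        have "x \<bullet> ((\<mu> *\<^sub>R L) *v x) = (\<Sum>k\<in>UNIV. \<mu> * (blk y k \<bullet> blk y k))"
          by (simp add: scal_quad QL y_def sum_distrib_left)
        also have "\<dots> \<le> (\<Sum>k\<in>UNIV. \<mu>k k * (blk y k \<bullet> blk y k))"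
          by (intro sum_mono mult_right_mono \<mu>\<mu>) simp
        also have "\<dots> \<le> (\<Sum>k\<in>UNIV. blk y k \<bullet> (integral {t..t + Tk k} (\<lambda>\<tau>. proj_perp (g \<tau> k)) *v blk y k))"
          using lek by (intro sum_mono) (simp add: loewner_iff scal_id)
        also have "\<dots> = (\<Sum>k\<in>UNIV. integral {t..t + Tk k} (\<lambda>\<tau>. blk y k \<bullet> (proj_perp (g \<tau> k) *v blk y k)))"
          by (intro sum.cong refl quad_integral[symmetric] intk)
        also have "\<dots> \<le> (\<Sum>k\<in>UNIV. integral {t..t + T} (\<lambda>\<tau>. blk y k \<bullet> (proj_perp (g \<tau> k) *v blk y k)))"
        proof (intro sum_mono integral_subset_le)
          fix k
          show "{t..t + Tk k} \<subseteq> {t..t + T}" using TkT[of k] by auto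
        qed (auto intro: intq psd)
        also have "\<dots> = integral {t..t + T} (\<lambda>\<tau>. \<Sum>k\<in>UNIV. blk y k \<bullet> (proj_perp (g \<tau> k) *v blk y k))"
          by (rule integral_sum[symmetric]) (auto intro: intq)
        also have "\<dots> = integral {t..t + T} (\<lambda>\<tau>. x \<bullet> (LB \<tau> *v x))"
          by (simp add: QLB y_def)
        also have "\<dots> = x \<bullet> (integral {t..t + T} LB *v x)"
          by (rule quad_integral[OF intLB])
        finally show "x \<bullet> ((\<mu> *\<^sub>R L) *v x) \<le> x \<bullet> (integral {t..t + T} LB *v x)" .
      qed
    qed (use Tpos \<mu>pos in auto)
  qed

  show ?thesis using dir1 dir2 assms(4) unfolding BPE_def by blast
qed


end
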